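(* Let $A$ be a unital power-associative algebra over a field of characteristic zero, let $R$ be a Rota–Baxter operator of weight zero on $A$, and suppose $(R(1))^m=0$ for some $m\in\mathbb N$. Then (a) $R^{2m}=0$ if $A$ is associative or alternative; (b) $R^{3m-1}=0$ if $A$ is a Jordan algebra.
   Context: A linear operator $R$ on $A$ is a Rota–Baxter operator of weight $0$ if $R(x)R(y)=R(R(x)y+xR(y))$ for all $x,y\in A$. Power-associative: every element generates an associative subalgebra. *)

theory Defs
  imports Complex_Main
begin

definition nonassoc_algebra :: "('k::field \<Rightarrow> 'a::ab_group_add \<Rightarrow> 'a) \<Rightarrow> ('a \<Rightarrow> 'a \<Rightarrow> 'a) \<Rightarrow> bool" where
  "nonassoc_algebra scale mul \<longleftrightarrow> Vector_Spaces.vector_space scale \<and>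
     (\<forall>x y z. mul (x + y) z = mul x z + mul y z) \<and>
     (\<forall>x y z. mul x (y + z) = mul x y + mul x z) \<and>
     (\<forall>c x y. mul (scale c x) y = scale c (mul x y)) \<and>
     (\<forall>c x y. mul x (scale c y) = scale c (mul x y))"

definition unital :: "('a \<Rightarrow> 'a \<Rightarrow> 'a) \<Rightarrow> 'a \<Rightarrow> bool" where
  "unital mul e \<longleftrightarrow> (\<forall>x. mul e x = x \<and> mul x e = x)"

inductive_set gen_subalg :: "('k \<Rightarrow> 'a::ab_group_add \<Rightarrow> 'a) \<Rightarrow> ('a \<Rightarrow> 'a \<Rightarrow> 'a) \<Rightarrow> 'a \<Rightarrow> 'a set"
  for scale mul x where
  gen: "x \<in> gen_subalg scale mul x"
| zero: "0 \<in> gen_subalg scale mul x"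
| add: "u \<in> gen_subalg scale mul x \<Longrightarrow> v \<in> gen_subalg scale mul x \<Longrightarrow> u + v \<in> gen_subalg scale mul x"
| smul: "u \<in> gen_subalg scale mul x \<Longrightarrow> scale c u \<in> gen_subalg scale mul x"
| mult: "u \<in> gen_subalg scale mul x \<Longrightarrow> v \<in> gen_subalg scale mul x \<Longrightarrow> mul u v \<in> gen_subalg scale mul x"

definition power_assoc :: "('k \<Rightarrow> 'a::ab_group_add \<Rightarrow> 'a) \<Rightarrow> ('a \<Rightarrow> 'a \<Rightarrow> 'a) \<Rightarrow> bool" where
  "power_assoc scale mul \<longleftrightarrow> (\<forall>x. \<forall>u\<in>gen_subalg scale mul x. \<forall>v\<in>gen_subalg scale mul x.
      \<forall>w\<in>gen_subalg scale mul x. mul (mul u v) w = mul u (mul v w))"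

definition associative_alg :: "('a \<Rightarrow> 'a \<Rightarrow> 'a) \<Rightarrow> bool" where
  "associative_alg mul \<longleftrightarrow> (\<forall>x y z. mul (mul x y) z = mul x (mul y z))"

definition alternative_alg :: "('a \<Rightarrow> 'a \<Rightarrow> 'a) \<Rightarrow> bool" where
  "alternative_alg mul \<longleftrightarrow> (\<forall>x y. mul x (mul x y) = mul (mul x x) y \<and> mul (mul y x) x = mul y (mul x x))"

definition jordan_alg :: "('a \<Rightarrow> 'a \<Rightarrow> 'a) \<Rightarrow> bool" where
  "jordan_alg mul \<longleftrightarrow> (\<forall>x y. mul x y = mul y x) \<and>
     (\<forall>x y. mul (mul x y) (mul x x) = mul x (mul y (mul x x)))"

primrec npow :: "('a \<Rightarrow> 'a \<Rightarrow> 'a) \<Rightarrow> 'a \<Rightarrow> 'a \<Rightarrow> nat \<Rightarrow> 'a" where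
  "npow mul e a 0 = e"
| "npow mul e a (Suc n) = mul (npow mul e a n) a"

definition rota_baxter0 :: "('k::field \<Rightarrow> 'a::ab_group_add \<Rightarrow> 'a) \<Rightarrow> ('a \<Rightarrow> 'a \<Rightarrow> 'a) \<Rightarrow> ('a \<Rightarrow> 'a) \<Rightarrow> bool" where
  "rota_baxter0 scale mul R \<longleftrightarrow> Vector_Spaces.linear scale scale R \<and>
     (\<forall>x y. mul (R x) (R y) = R (mul (R x) y + mul x (R y)))"

end

theory Submission
  imports Defs
begin

lemma main_aux:
  fixes scale :: "'k::field_char_0 \<Rightarrow> 'a::ab_group_add \<Rightarrow> 'a"
    and mul :: "'a \<Rightarrow> 'a \<Rightarrow> 'a" and e :: 'a and R :: "'a \<Rightarrow> 'a" and m :: nat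
  assumes alg: "nonassoc_algebra scale mul"
    and un: "unital mul e"
    and rb: "rota_baxter0 scale mul R"
    and nil: "npow mul e (R e) m = 0"
  shows "R ^^ (2 * m) = (\<lambda>_. 0)"
proof -
  have vs: "Vector_Spaces.vector_space scale" using alg unfolding nonassoc_algebra_def by blast
  have lin: "Vector_Spaces.linear scale scale R" using rb unfolding rota_baxter0_def by blast
  interpret V: Vector_Spaces.vector_space scale by (rule vs)
  interpret L: Vector_Spaces.linear scale scale R by (rule lin)
  have RB: "\<And>x y. mul (R x) (R y) = R (mul (R x) y + mul x (R y))"
    using rb unfolding rota_baxter0_def by blast
  have addr: "\<And>x y z. mul x (y + z) = mul x y + mul x z"
    using alg unfolding nonassoc_algebra_def by blast
  have addl: "\<And>x y z. mul (x + y) z = mul x z + mul y z"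
    using alg unfolding nonassoc_algebra_def by blast
  have scl: "\<And>c x y. mul (scale c x) y = scale c (mul x y)"
    using alg unfolding nonassoc_algebra_def by blast
  have mul0r: "\<And>x. mul x 0 = 0"
    using addr[of _ 0 0] by simp
  have mul0l: "\<And>x. mul 0 x = 0"
    using addl[of 0 0] by simp
  have ue: "\<And>x. mul e x = x" "\<And>x. mul x e = x" using un unfolding unital_def by auto
  define b where "b n = (R ^^ n) e" for n
  define a where "a = R e"
  have Rpow_diff: "\<And>s u v. (R ^^ s) (u - v) = (R ^^ s) u - (R ^^ s) v"
  proof -
    fix s u v show "(R ^^ s) (u - v) = (R ^^ s) u - (R ^^ s) v"
      by (induction s) (auto simp: L.diff)
  qed
  have Rpow0: "\<And>s. (R ^^ s) 0 = 0"
  proof -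
    fix s show "(R ^^ s) 0 = 0" by (induction s) auto
  qed
  have ba: "mul (b n) a = scale (of_nat (Suc n)) (b (Suc n))" for n
  proof (induction n)
    case 0
    then show ?case by (simp add: b_def a_def ue)
  next
    case (Suc n)
    have "mul (b (Suc n)) a = mul (R (b n)) (R e)" by (simp add: b_def a_def)
    also have "\<dots> = R (mul (R (b n)) e + mul (b n) (R e))" by (rule RB)
    also have "\<dots> = R (b (Suc n) + scale (of_nat (Suc n)) (b (Suc n)))"
      using Suc by (simp add: ue b_def a_def)
    also have "b (Suc n) + scale (of_nat (Suc n)) (b (Suc n)) = scale (of_nat (Suc (Suc n))) (b (Suc n))"
      by (metis V.scale_left_distrib V.scale_one of_nat_Suc add.commute)
    also have "R \<dots> = scale (of_nat (Suc (Suc n))) (b (Suc (Suc n)))"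
      by (simp add: L.scale b_def)
    finally show ?case .
  qed
  have np: "npow mul e a n = scale (of_nat (fact n)) (b n)" for n
  proof (induction n)
    case 0 then show ?case by (simp add: b_def)
  next
    case (Suc n)
    have "npow mul e a (Suc n) = scale (of_nat (fact n)) (mul (b n) a)"
      using Suc by (simp add: scl)
    also have "\<dots> = scale (of_nat (fact (Suc n))) (b (Suc n))"
      by (simp add: ba algebra_simps)
    finally show ?case .
  qed
  have bm: "b m = 0"
    using np[of m] nil by (simp add: a_def)
  have key: "\<And>x k. mul (R x) (b (Suc k)) - R (mul x (b (Suc k))) = R (mul (R x) (b k))"
  proof -
    fix x k
    have "mul (R x) (R (b k)) = R (mul (R x) (b k) + mul x (R (b k)))" by (rule RB)
    then show "mul (R x) (b (Suc k)) - R (mul x (b (Suc k))) = R (mul (R x) (b k))"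
      by (simp add: b_def L.add)
  qed
  have ind: "\<And>s t x. d \<le> m \<Longrightarrow> d \<le> s \<Longrightarrow> d \<le> t \<Longrightarrow> (R ^^ s) (mul ((R ^^ t) x) (b (m - d))) = 0" for d
  proof (induction d)
    case 0 then show ?case by (simp add: bm mul0r Rpow0)
  next
    case (Suc d)
    fix s t x
    assume h: "Suc d \<le> m" "Suc d \<le> s" "Suc d \<le> t"
    obtain s' where s': "s = Suc s'" using h by (cases s) auto
    obtain t' where t': "t = Suc t'" using h by (cases t) auto
    have mk: "m - d = Suc (m - Suc d)" using h by simp
    let ?y = "(R ^^ t') x"
    have ft: "(R ^^ t) x = R ?y" using t' by simp
    have fs: "\<And>y. (R ^^ s) y = (R ^^ s') (R y)" using s' by (simp add: funpow_Suc_right del: funpow.simps)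
    have "(R ^^ s) (mul ((R ^^ t) x) (b (m - Suc d))) = (R ^^ s') (R (mul (R ?y) (b (m - Suc d))))"
      by (simp only: ft fs)
    also have "\<dots> = (R ^^ s') (mul (R ?y) (b (m - d)) - R (mul ?y (b (m - d))))"
      by (simp add: mk key)
    also have "\<dots> = (R ^^ s') (mul ((R ^^ t) x) (b (m - d))) - (R ^^ s) (mul ?y (b (m - d)))"
      by (simp only: Rpow_diff ft fs)
    also have "\<dots> = 0"
    proof -
      have i1: "(R ^^ s') (mul ((R ^^ t) x) (b (m - d))) = 0"
        using Suc.IH[of s' t x] h s' t' by simp
      have i2: "(R ^^ s) (mul ?y (b (m - d))) = 0"
        using Suc.IH[of s t' x] h s' t' by simp
      show ?thesis using i1 i2 by simp
    qed
    finally show "(R ^^ s) (mul ((R ^^ t) x) (b (m - Suc d))) = 0" .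
  qed
  have "(R ^^ (2 * m)) x = 0" for x
    using ind[of m m m x] by (simp add: b_def ue mult_2 funpow_add)
  then show ?thesis by auto
qed

theorem lemma11:
  fixes scale :: "'k::field_char_0 \<Rightarrow> 'a::ab_group_add \<Rightarrow> 'a"
    and mul :: "'a \<Rightarrow> 'a \<Rightarrow> 'a" and e :: 'a and R :: "'a \<Rightarrow> 'a" and m :: nat
  assumes "nonassoc_algebra scale mul"
    and "unital mul e"
    and "power_assoc scale mul"
    and "rota_baxter0 scale mul R"
    and "npow mul e (R e) m = 0"
  shows "((associative_alg mul \<or> alternative_alg mul) \<longrightarrow> R ^^ (2 * m) = (\<lambda>_. 0))
       \<and> (jordan_alg mul \<longrightarrow> R ^^ (3 * m - 1) = (\<lambda>_. 0))"
proof -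
  have z: "R ^^ (2 * m) = (\<lambda>_. 0)"
    using main_aux[OF assms(1,2,4,5)] .
  have lin: "Vector_Spaces.linear scale scale R" using assms(4) unfolding rota_baxter0_def by blast
  interpret L: Vector_Spaces.linear scale scale R by (rule lin)
  have Rpow0: "\<And>s. (R ^^ s) 0 = 0"
  proof -
    fix s show "(R ^^ s) 0 = 0" by (induction s) auto
  qed
  have "R ^^ (3 * m - 1) = (\<lambda>_. 0)"
  proof (cases m)
    case 0 then show ?thesis using z by simp
  next
    case (Suc k)
    then have "3 * m - 1 = (m - 1) + 2 * m" by simp
    then show ?thesis using z Rpow0 by (simp add: funpow_add comp_def del: funpow.simps)
  qed
  then show ?thesis using z by blast
qed

end
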